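(* Let $(F,C,(u_f)_{f\in F},d,k)$ be an instance of Capacitated $k$-Median. Let $A\subseteq F$ be a set of at most $\ell$ facilities (a solution to Uncapacitated $k$-Median opening at most $\ell\ge k$ facilities), and let $\mathrm{cost}_d(A)=\sum_{c\in C}\min_{f\in A} d(c,f)$. Construct the $\ell$-centered metric $d_\ell$ from $A$ as follows: for each $f\in A$ create a new point $s^f$ (a center) with $d(s^f,f)=0$, extending $d$ naturally to $F\cup C\cup S$ where $S=\{s^f: f\in A\}$; build a weighted graph on $F\cup C\cup S$ consisting of a complete graph on $S$ with edge lengths given by $d$, and, for every $v\in F\cup C$, a single edge from $v$ to a center $s^v\in S$ closest to $v$ (with respect to the extended $d$), of length $d(v,s^v)$; let $d_\ell$ be the shortest-path metric of this graph. Let $\phi^*$ be the assignment of an optimal solution of the Capacitated $k$-Median instance with metric $d$, and for a metric $d'$ write $\mathrm{cost}(\phi^*,d')=\sum_{c\in C}d'(c,\phi^*(c))$. Then $$\mathrm{cost}(\phi^*,d)\le \mathrm{cost}(\phi^*,d_\ell)\le 3\,\mathrm{cost}(\phi^*,d)+4\,\mathrm{cost}_d(A).$$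
   Context: Capacitated $k$-Median: given facilities $F$ with capacities $u_f\in\mathbb{Z}_{\ge0}$, clients $C$, a metric $d$ on $F\cup C$ and an integer $k$; a feasible solution is a set of at most $k$ open facilities and an assignment $\phi$ of clients to open facilities with at most $u_f$ clients assigned to each open $f$; the cost is $\sum_{c}d(c,\phi(c))$, to be minimized. *)

theory Defs
  imports Complex_Main
begin

definition is_metric_on :: "'a set \<Rightarrow> ('a \<Rightarrow> 'a \<Rightarrow> real) \<Rightarrow> bool" where
  "is_metric_on X d \<longleftrightarrow>
     (\<forall>x\<in>X. \<forall>y\<in>X. d x y \<ge> 0 \<and> d x y = d y x \<and> (d x y = 0 \<longleftrightarrow> x = y)) \<and>
     (\<forall>x\<in>X. \<forall>y\<in>X. \<forall>z\<in>X. d x z \<le> d x y + d y z)"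

definition ckm_feasible ::
  "'a set \<Rightarrow> 'a set \<Rightarrow> ('a \<Rightarrow> nat) \<Rightarrow> nat \<Rightarrow> 'a set \<Rightarrow> ('a \<Rightarrow> 'a) \<Rightarrow> bool" where
  "ckm_feasible F C u k Op \<phi> \<longleftrightarrow>
     Op \<subseteq> F \<and> card Op \<le> k \<and> (\<forall>c\<in>C. \<phi> c \<in> Op) \<and>
     (\<forall>f\<in>Op. card {c\<in>C. \<phi> c = f} \<le> u f)"

definition assign_cost :: "('b \<Rightarrow> 'b \<Rightarrow> real) \<Rightarrow> 'a set \<Rightarrow> ('a \<Rightarrow> 'b) \<Rightarrow> ('a \<Rightarrow> 'a) \<Rightarrow> real" where
  "assign_cost d' C emb \<phi> = (\<Sum>c\<in>C. d' (emb c) (emb (\<phi> c)))"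

definition ckm_optimal ::
  "'a set \<Rightarrow> 'a set \<Rightarrow> ('a \<Rightarrow> nat) \<Rightarrow> ('a \<Rightarrow> 'a \<Rightarrow> real) \<Rightarrow> nat \<Rightarrow> 'a set \<Rightarrow> ('a \<Rightarrow> 'a) \<Rightarrow> bool" where
  "ckm_optimal F C u d k Op \<phi> \<longleftrightarrow> ckm_feasible F C u k Op \<phi> \<and>
     (\<forall>Op' \<phi>'. ckm_feasible F C u k Op' \<phi>' \<longrightarrow> assign_cost d C id \<phi> \<le> assign_cost d C id \<phi>')"

definition cost_set :: "('a \<Rightarrow> 'a \<Rightarrow> real) \<Rightarrow> 'a set \<Rightarrow> 'a set \<Rightarrow> real" where
  "cost_set d C A = (\<Sum>c\<in>C. Min ((\<lambda>f. d c f) ` A))"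

definition is_walk :: "('v \<Rightarrow> 'v \<Rightarrow> bool) \<Rightarrow> 'v list \<Rightarrow> 'v \<Rightarrow> 'v \<Rightarrow> bool" where
  "is_walk E p u v \<longleftrightarrow> p \<noteq> [] \<and> hd p = u \<and> last p = v \<and>
     (\<forall>(x,y)\<in>set (zip p (tl p)). E x y)"

definition walk_length :: "('v \<Rightarrow> 'v \<Rightarrow> real) \<Rightarrow> 'v list \<Rightarrow> real" where
  "walk_length w p = sum_list (map (\<lambda>(x,y). w x y) (zip p (tl p)))"

definition shortest_path_dist ::
  "('v \<Rightarrow> 'v \<Rightarrow> bool) \<Rightarrow> ('v \<Rightarrow> 'v \<Rightarrow> real) \<Rightarrow> 'v \<Rightarrow> 'v \<Rightarrow> real" where
  "shortest_path_dist E w u v = Inf {walk_length w p | p. is_walk E p u v}"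

text \<open>Vertices: Inl x for x in F \<union> C, Inr f for the new center s^f (f in A).
  The extension of d identifies s^f with f (so d(s^f,f) = 0).\<close>
definition ext_metric :: "('a \<Rightarrow> 'a \<Rightarrow> real) \<Rightarrow> 'a + 'a \<Rightarrow> 'a + 'a \<Rightarrow> real" where
  "ext_metric d x y = d (case_sum id id x) (case_sum id id y)"

text \<open>sel v is the facility f in A whose center s^f is the chosen closest center s^v.\<close>
definition centered_edges ::
  "'a set \<Rightarrow> 'a set \<Rightarrow> 'a set \<Rightarrow> ('a \<Rightarrow> 'a) \<Rightarrow> 'a + 'a \<Rightarrow> 'a + 'a \<Rightarrow> bool" where
  "centered_edges F C A sel x y \<longleftrightarrow>
     (\<exists>f g. x = Inr f \<and> y = Inr g \<and> f \<in> A \<and> g \<in> A \<and> f \<noteq> g) \<or>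
     (\<exists>v. v \<in> F \<union> C \<and> x = Inl v \<and> y = Inr (sel v)) \<or>
     (\<exists>v. v \<in> F \<union> C \<and> y = Inl v \<and> x = Inr (sel v))"

definition centered_metric ::
  "'a set \<Rightarrow> 'a set \<Rightarrow> ('a \<Rightarrow> 'a \<Rightarrow> real) \<Rightarrow> 'a set \<Rightarrow> ('a \<Rightarrow> 'a) \<Rightarrow> 'a + 'a \<Rightarrow> 'a + 'a \<Rightarrow> real" where
  "centered_metric F C d A sel = shortest_path_dist (centered_edges F C A sel) (ext_metric d)"

end

theory Submission
  imports Defs
begin

lemma walk_lb:
  fixes d :: "'a \<Rightarrow> 'a \<Rightarrow> real"
  assumes met: "is_metric_on S d"
    and edge: "\<And>x y. E x y \<Longrightarrow> case_sum id id y \<in> S"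
  shows "p \<noteq> [] \<Longrightarrow> case_sum id id (hd p) \<in> S \<Longrightarrow> (\<forall>(x,y)\<in>set (zip p (tl p)). E x y) \<Longrightarrow>
     case_sum id id (last p) \<in> S \<and>
     d (case_sum id id (hd p)) (case_sum id id (last p)) \<le> walk_length (ext_metric d) p"
proof (induction p)
  case Nil
  then show ?case by simp
next
  case (Cons x xs)
  show ?case
  proof (cases xs)
    case Nil
    have "d (case_sum id id x) (case_sum id id x) = 0" using Cons.prems met unfolding is_metric_on_def by simp
    then show ?thesis using Cons.prems Nil by (simp add: walk_length_def)
  next
    case (Cons y ys)
    have Exy: "E x y" using Cons Cons.prems by simp
    have yS: "case_sum id id y \<in> S" using edge[OF Exy] .
    have IH: "case_sum id id (last xs) \<in> S \<and>
       d (case_sum id id y) (case_sum id id (last xs)) \<le> walk_length (ext_metric d) xs"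
      using Cons.IH Cons Cons.prems yS by simp
    have wl: "walk_length (ext_metric d) (x # xs) = ext_metric d x y + walk_length (ext_metric d) xs"
      using Cons by (simp add: walk_length_def)
    have xS: "case_sum id id x \<in> S" using Cons.prems by simp
    have tri: "d (case_sum id id x) (case_sum id id (last xs)) \<le> d (case_sum id id x) (case_sum id id y)
       + d (case_sum id id y) (case_sum id id (last xs))"
      using met xS yS IH unfolding is_metric_on_def by blast
    have ex: "ext_metric d x y = d (case_sum id id x) (case_sum id id y)" by (simp add: ext_metric_def)
    have la: "last (x#xs) = last xs" "hd (x#xs) = x" using Cons by simp_all
    show ?thesis unfolding la using IH tri wl ex by linarith
  qed
qed

theorem lemma2:
  fixes F C A :: "'a set" and u :: "'a \<Rightarrow> nat" and d :: "'a \<Rightarrow> 'a \<Rightarrow> real"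
    and k l :: nat and sel :: "'a \<Rightarrow> 'a" and Op :: "'a set" and \<phi> :: "'a \<Rightarrow> 'a"
  assumes "finite F" and "finite C"
    and "is_metric_on (F \<union> C) d"
    and "A \<subseteq> F" and "A \<noteq> {}" and "card A \<le> l" and "k \<le> l"
    and "\<And>v. v \<in> F \<union> C \<Longrightarrow> sel v \<in> A \<and> (\<forall>f\<in>A. d v (sel v) \<le> d v f)"
    and "ckm_optimal F C u d k Op \<phi>"
  shows "assign_cost d C id \<phi> \<le> assign_cost (centered_metric F C d A sel) C Inl \<phi> \<and>
         assign_cost (centered_metric F C d A sel) C Inl \<phi>
           \<le> 3 * assign_cost d C id \<phi> + 4 * cost_set d C A"
proof -
  note met = assms(3)
  note selA = assms(8)
  let ?E = "centered_edges F C A sel"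
  let ?w = "ext_metric d"
  let ?D = "centered_metric F C d A sel"
  have phiF: "\<phi> c \<in> F" if "c \<in> C" for c
    using assms(9) that unfolding ckm_optimal_def ckm_feasible_def by blast
  have edge: "case_sum id id y \<in> F \<union> C" if "?E x y" for x y
    using that selA assms(4) unfolding centered_edges_def by auto
  have M: "\<And>x y z. x \<in> F \<union> C \<Longrightarrow> y \<in> F \<union> C \<Longrightarrow> z \<in> F \<union> C \<Longrightarrow> d x z \<le> d x y + d y z"
    and S: "\<And>x y. x \<in> F \<union> C \<Longrightarrow> y \<in> F \<union> C \<Longrightarrow> d x y = d y x"
    and Z: "\<And>x. x \<in> F \<union> C \<Longrightarrow> d x x = 0"
    using met unfolding is_metric_on_def by blast+
  have key: "d c (\<phi> c) \<le> ?D (Inl c) (Inl (\<phi> c)) \<and>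
      ?D (Inl c) (Inl (\<phi> c)) \<le> 3 * d c (\<phi> c) + 4 * Min ((\<lambda>f. d c f) ` A)" if c: "c \<in> C" for c
  proof -
    define f where "f = \<phi> c"
    have cS: "c \<in> F \<union> C" using c by simp
    have fS: "f \<in> F \<union> C" using phiF[OF c] f_def by simp
    define a where "a = sel c"
    define b where "b = sel f"
    have aA: "a \<in> A" and bA: "b \<in> A" using selA cS fS a_def b_def by auto
    have aS: "a \<in> F \<union> C" and bS: "b \<in> F \<union> C" using aA bA assms(4) by auto
    have amin: "d c a \<le> d c b" using selA[OF cS] bA a_def by auto
    have bmin: "d f b \<le> d f a" using selA[OF fS] aA b_def by auto
    define p where "p = (if a = b then [Inl c, Inr a, Inl f] else [Inl c, Inr a, Inr b, Inl f])"
    have walk: "is_walk ?E p (Inl c) (Inl f)"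
      unfolding p_def is_walk_def centered_edges_def using cS fS a_def b_def aA bA by auto
    let ?L = "{walk_length ?w p | p. is_walk ?E p (Inl c) (Inl f)}"
    have lb: "d c f \<le> x" if "x \<in> ?L" for x
    proof -
      from that obtain q where q: "x = walk_length ?w q" "is_walk ?E q (Inl c) (Inl f)" by blast
      have "case_sum id id (last q) \<in> F \<union> C \<and>
          d (case_sum id id (hd q)) (case_sum id id (last q)) \<le> walk_length ?w q"
      proof (rule walk_lb[OF met])
        show "\<And>x y. ?E x y \<Longrightarrow> case_sum id id y \<in> F \<union> C" by (rule edge)
        show "q \<noteq> []" using q(2) unfolding is_walk_def by simp
        show "case_sum id id (hd q) \<in> F \<union> C" using q(2) cS unfolding is_walk_def by simp
        show "\<forall>(x,y)\<in>set (zip q (tl q)). ?E x y" using q(2) unfolding is_walk_def by simp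
      qed
      then show ?thesis using q unfolding is_walk_def by auto
    qed
    have ne: "?L \<noteq> {}" using walk by blast
    have bdd: "bdd_below ?L" using lb by (meson bdd_below.I)
    have Deq: "?D (Inl c) (Inl f) = Inf ?L"
      unfolding centered_metric_def shortest_path_dist_def by simp
    have part1: "d c f \<le> ?D (Inl c) (Inl f)" unfolding Deq by (rule cInf_greatest[OF ne lb])
    have "?D (Inl c) (Inl f) \<le> walk_length ?w p"
      using Deq bdd walk by (auto intro!: cInf_lower)
    also have "walk_length ?w p \<le> 3 * d c f + 4 * d c a"
    proof (cases "a = b")
      case True
      have "d a f \<le> d a c + d c f" using M aS cS fS by blast
      moreover have "d c a \<ge> 0" "d c f \<ge> 0" using met aS cS fS unfolding is_metric_on_def by blast+
      ultimately show ?thesis using True S[OF aS cS] S[OF aS fS] amin Z cS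
        unfolding p_def walk_length_def ext_metric_def
        by simp
    next
      case False
      have t1: "d a b \<le> d a c + d c f + d f b"
        using M[OF aS cS bS] M[OF cS fS bS] by linarith
      have t2: "d f a \<le> d f c + d c a" using M[OF fS cS aS] .
      have "d b f = d f b" using S bS fS by blast
      moreover have "d a c = d c a" "d f c = d c f" using S aS cS fS by blast+
      moreover have "d c a \<ge> 0" using met aS cS unfolding is_metric_on_def by blast
      ultimately show ?thesis using False t1 t2 bmin
        unfolding p_def walk_length_def ext_metric_def by simp
    qed
    finally have part2: "?D (Inl c) (Inl f) \<le> 3 * d c f + 4 * d c a" .
    have "Min ((\<lambda>f. d c f) ` A) = d c a"
    proof (rule Min_eqI)
      show "finite ((\<lambda>f. d c f) ` A)" using assms(1,4) finite_subset by blast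
      show "\<And>y. y \<in> (\<lambda>f. d c f) ` A \<Longrightarrow> d c a \<le> y" using selA[OF cS] a_def by auto
      show "d c a \<in> (\<lambda>f. d c f) ` A" using aA by blast
    qed
    then show ?thesis using part1 part2 f_def by simp
  qed
  have s1: "assign_cost d C id \<phi> \<le> assign_cost ?D C Inl \<phi>"
    unfolding assign_cost_def using key by (auto intro!: sum_mono)
  have "assign_cost ?D C Inl \<phi> \<le> (\<Sum>c\<in>C. 3 * d c (\<phi> c) + 4 * Min ((\<lambda>f. d c f) ` A))"
    unfolding assign_cost_def using key by (auto intro!: sum_mono)
  also have "\<dots> = 3 * assign_cost d C id \<phi> + 4 * cost_set d C A"
    unfolding assign_cost_def cost_set_def by (simp add: sum.distrib sum_distrib_left)
  finally show ?thesis using s1 by simp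
qed

end
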